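(* Let $f_1,f_2$ be strongly hyperbolic functions, $a_1,a_2>0$, $b_1,b_2,c_1,c_2\in\mathbb{R}$ with $(a_1,b_1,c_1)\neq(a_2,b_2,c_2)$, and let $D_1=\overline{f_{a_1,b_1,c_1}}$, $D_2=\overline{f_{a_2,b_2,c_2}}$. If one of the following holds, then $D_1\cap D_2=\{p\}$: (1) $p=(b,\infty)$, $a_1=a_2$, $b_1=b_2=-b$ and $c_1\neq c_2$; (2) $p=(\infty,c)$, $a_1=a_2$, $b_1\neq b_2$ and $c_1=c_2=c$; (3) $p=(x_p,y_p)\in\mathbb{R}^2$, $f_{a_1,b_1,c_1}(x_p)=f_{a_2,b_2,c_2}(x_p)=y_p$ and $f'_{a_1,b_1,c_1}(x_p)=f'_{a_2,b_2,c_2}(x_p)$.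
   Context: Identify $\mathbb{S}^1$ with $\mathbb{R}\cup\{\infty\}$, $\mathcal{P}=\mathbb{S}^1\times\mathbb{S}^1$, $\mathbb{R}^+=(0,\infty)$. A function $f:\mathbb{R}^+\to\mathbb{R}^+$ is strongly hyperbolic if: (1) $\lim_{x\to0+}f(x)=+\infty$, $\lim_{x\to+\infty}f(x)=0$; (2) $f$ strictly convex; (3) $\lim_{x\to+\infty}f(x+b)/f(x)=1$ for each $b\in\mathbb{R}$; (4) $f$ differentiable; (5) $\ln|f'|$ strictly convex. For $a>0$, $b,c\in\mathbb{R}$: $f_{a,b,c}:\mathbb{R}\setminus\{-b\}\to\mathbb{R}$, $f_{a,b,c}(x)=af_1(x+b)+c$ for $x>-b$, $f_{a,b,c}(x)=-af_2(-x-b)+c$ for $x<-b$; $\overline{f_{a,b,c}}=\{(x,f_{a,b,c}(x)):x\ne-b\}\cup\{(-b,\infty),(\infty,c)\}\subset\mathcal{P}$. *)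

theory Defs
  imports "HOL-Analysis.Analysis"
begin

text \<open>The circle S^1 identified with the real line plus a point at infinity.\<close>
datatype circ = Fin real | Infty

definition strictly_convex_on :: "real set \<Rightarrow> (real \<Rightarrow> real) \<Rightarrow> bool" where
  "strictly_convex_on S g \<longleftrightarrow>
     (\<forall>x\<in>S. \<forall>y\<in>S. \<forall>t::real. x \<noteq> y \<and> 0 < t \<and> t < 1 \<longrightarrow>
        g ((1 - t) * x + t * y) < (1 - t) * g x + t * g y)"

text \<open>Strongly hyperbolic functions R+ -> R+ (only values on (0,oo) matter).\<close>
definition strongly_hyperbolic :: "(real \<Rightarrow> real) \<Rightarrow> bool" where
  "strongly_hyperbolic f \<longleftrightarrow>
     (\<forall>x>0. f x > 0) \<and>
     filterlim f at_top (at_right 0) \<and>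
     (f \<longlongrightarrow> 0) at_top \<and>
     strictly_convex_on {0<..} f \<and>
     (\<forall>b::real. ((\<lambda>x. f (x + b) / f x) \<longlongrightarrow> 1) at_top) \<and>
     (\<forall>x>0. f differentiable (at x)) \<and>
     strictly_convex_on {0<..} (\<lambda>x. ln \<bar>deriv f x\<bar>)"

text \<open>f_{a,b,c}, defined on R minus {-b} (value at -b is irrelevant; set to 0).\<close>
definition fabc :: "(real \<Rightarrow> real) \<Rightarrow> (real \<Rightarrow> real) \<Rightarrow> real \<Rightarrow> real \<Rightarrow> real \<Rightarrow> real \<Rightarrow> real" where
  "fabc f1 f2 a b c x =
     (if x > -b then a * f1 (x + b) + c
      else if x < -b then - a * f2 (- x - b) + c
      else 0)"

definition graph_closure :: "(real \<Rightarrow> real) \<Rightarrow> (real \<Rightarrow> real) \<Rightarrow> real \<Rightarrow> real \<Rightarrow> real \<Rightarrow> (circ \<times> circ) set" where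
  "graph_closure f1 f2 a b c =
     {(Fin x, Fin (fabc f1 f2 a b c x)) | x. x \<noteq> -b} \<union> {(Fin (-b), Infty), (Infty, Fin c)}"

end

theory Submission
  imports Defs
begin

lemma sc_convex: "strictly_convex_on {0<..} f \<Longrightarrow> convex_on {0<..} f"
  apply (rule convex_on_linorderI)
   apply (auto simp: strictly_convex_on_def intro: less_imp_le)
  done

lemma sh_deriv: "strongly_hyperbolic f \<Longrightarrow> x > 0 \<Longrightarrow> DERIV f x :> deriv f x"
  unfolding strongly_hyperbolic_def using DERIV_deriv_iff_real_differentiable by blast

lemma sh_tangent:
  assumes "strongly_hyperbolic f" "x > 0" "z > 0"
  shows "f z - f x \<ge> deriv f x * (z - x)"
proof (rule convex_on_imp_above_tangent[where A="{0<..}"])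
  show "convex_on {0<..} f" using assms(1) sc_convex unfolding strongly_hyperbolic_def by blast
  show "(f has_field_derivative deriv f x) (at x within {0<..})"
    using sh_deriv[OF assms(1,2)] by (rule DERIV_subset) auto
qed (use assms in \<open>auto simp: interior_open\<close>)

lemma sh_negderiv:
  assumes sh: "strongly_hyperbolic f" and x: "x > 0"
  shows "deriv f x < 0"
proof (rule ccontr)
  assume "\<not> deriv f x < 0"
  hence d: "deriv f x \<ge> 0" by simp
  have lim: "(f \<longlongrightarrow> 0) at_top" and pos: "f x > 0" using sh x unfolding strongly_hyperbolic_def by auto
  have "eventually (\<lambda>z. f z < f x) at_top" using order_tendstoD(2)[OF lim pos] .
  then obtain N where N: "\<And>z. z \<ge> N \<Longrightarrow> f z < f x" by (auto simp: eventually_at_top_linorder)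
  define z where "z = max N (x+1)"
  have "f z - f x \<ge> deriv f x * (z - x)" using sh_tangent[OF sh x, of z] x by (simp add: z_def)
  moreover have "deriv f x * (z - x) \<ge> 0" using d by (simp add: z_def)
  moreover have "f z < f x" using N[of z] by (simp add: z_def)
  ultimately show False by linarith
qed

lemma sh_decr:
  assumes sh: "strongly_hyperbolic f" and "0 < x" "x < y"
  shows "f y < f x"
proof -
  have "f x - f y \<ge> deriv f y * (x - y)" using sh_tangent[OF sh, of y x] assms by simp
  moreover have "deriv f y * (x - y) > 0" using sh_negderiv[OF sh, of y] assms by (simp add: mult_neg_neg)
  ultimately show ?thesis by linarith
qed

lemma sh_pos: "strongly_hyperbolic f \<Longrightarrow> x > 0 \<Longrightarrow> f x > 0"
  unfolding strongly_hyperbolic_def by auto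

lemma sh_deriv_mono:
  assumes sh: "strongly_hyperbolic f" and "0 < x" "x < y"
  shows "deriv f x < deriv f y"
proof -
  define m where "m = (x + y) / 2"
  have sc: "strictly_convex_on {0<..} f" using sh unfolding strongly_hyperbolic_def by auto
  have "f ((1 - 1/2) * x + (1/2) * y) < (1 - 1/2) * f x + (1/2) * f y"
    using sc[unfolded strictly_convex_on_def, rule_format, of x y "1/2"] assms by simp
  moreover have "(1 - 1/2) * x + (1/2) * y = m" by (simp add: m_def)
  ultimately have s: "f m < (f x + f y) / 2" by simp
  have t1: "f m - f x \<ge> deriv f x * (m - x)" using sh_tangent[OF sh, of x m] assms by (simp add: m_def)
  have t2': "f m - f y \<ge> deriv f y * (m - y)" using sh_tangent[OF sh, of y m] assms by (simp add: m_def)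
  have "deriv f y * (y - m) = - (deriv f y * (m - y))" by (simp add: algebra_simps)
  hence t2: "f y - f m \<le> deriv f y * (y - m)" using t2' by linarith
  have h: "m - x = y - m" "m - x > 0" using assms by (auto simp: m_def field_simps)
  have "deriv f y * (y - m) = deriv f y * (m - x)" using h by simp
  have s2: "f m - f x < f y - f m" using s by (simp add: field_simps)
  have "deriv f x * (m - x) \<le> f m - f x" by (rule t1)
  also have "... < f y - f m" by (rule s2)
  also have "... \<le> deriv f y * (y - m)" by (rule t2)
  also have "... = deriv f y * (m - x)" by fact
  finally have "deriv f x * (m - x) < deriv f y * (m - x)" .
  thus ?thesis using h by simp
qed

lemma lin_comb: "(D::real) > 0 \<Longrightarrow> (1 - p / D) * u + (p / D) * q = ((D - p) * u + p * q) / D"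
  by (simp add: field_simps)

lemma sh_logconv:
  assumes sh: "strongly_hyperbolic f" and "0 < u" "u < w" "0 < d"
  shows "ln \<bar>deriv f w\<bar> + ln \<bar>deriv f (u + d)\<bar> < ln \<bar>deriv f u\<bar> + ln \<bar>deriv f (w + d)\<bar>"
proof -
  define l where "l = (\<lambda>x. ln \<bar>deriv f x\<bar>)"
  have sc: "strictly_convex_on {0<..} l" using sh unfolding strongly_hyperbolic_def l_def by auto
  define t1 where "t1 = (w - u) / (w + d - u)"
  define t2 where "t2 = d / (w + d - u)"
  have pos: "w + d - u > 0" using assms by simp
  have "(1 - t1) * u + t1 * (w + d) = ((w + d - u - (w - u)) * u + (w - u) * (w + d)) / (w + d - u)"
    using pos unfolding t1_def by (rule lin_comb)
  also have "(w + d - u - (w - u)) * u + (w - u) * (w + d) = w * (w + d - u)" by (simp add: algebra_simps)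
  finally have e1: "(1 - t1) * u + t1 * (w + d) = w" using pos by simp
  have "(1 - t2) * u + t2 * (w + d) = ((w + d - u - d) * u + d * (w + d)) / (w + d - u)"
    using pos unfolding t2_def by (rule lin_comb)
  also have "(w + d - u - d) * u + d * (w + d) = (u + d) * (w + d - u)" by (simp add: algebra_simps)
  finally have e2: "(1 - t2) * u + t2 * (w + d) = u + d" using pos by simp
  have r1: "0 < t1" "t1 < 1" "0 < t2" "t2 < 1" using assms pos by (auto simp: t1_def t2_def field_simps)
  have "l ((1 - t1) * u + t1 * (w + d)) < (1 - t1) * l u + t1 * l (w + d)"
    using sc r1 assms unfolding strictly_convex_on_def by auto
  hence i1: "l w < (1 - t1) * l u + t1 * l (w + d)" using e1 by simp
  have "l ((1 - t2) * u + t2 * (w + d)) < (1 - t2) * l u + t2 * l (w + d)"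
    using sc r1 assms unfolding strictly_convex_on_def by auto
  hence i2: "l (u + d) < (1 - t2) * l u + t2 * l (w + d)" using e2 by simp
  have "t1 + t2 = (w - u + d) / (w + d - u)" by (simp add: t1_def t2_def add_divide_distrib)
  also have "... = 1" using pos by simp
  finally have "t1 + t2 = 1" .
  hence t21: "t2 = 1 - t1" by simp
  have "(1 - t1) * l u + t1 * l (w + d) + ((1 - t2) * l u + t2 * l (w + d)) = l u + l (w + d)"
    unfolding t21 by (simp add: algebra_simps)
  hence "l w + l (u + d) < l u + l (w + d)" using i1 i2 by linarith
  thus ?thesis by (simp add: l_def)
qed



lemma valley:
  fixes H H' :: "real \<Rightarrow> real"
  assumes "x \<noteq> x0"
    and d: "\<And>y. min x x0 \<le> y \<Longrightarrow> y \<le> max x x0 \<Longrightarrow> DERIV H y :> H' y"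
    and n: "\<And>y. min x x0 < y \<Longrightarrow> y < x0 \<Longrightarrow> H' y < 0"
    and p: "\<And>y. x0 < y \<Longrightarrow> y < max x x0 \<Longrightarrow> H' y > 0"
  shows "H x > H x0"
proof (cases "x < x0")
  case True
  have "\<And>y. x \<le> y \<Longrightarrow> y \<le> x0 \<Longrightarrow> DERIV H y :> H' y" using d True by auto
  from MVT2[OF True this] obtain z where z: "x < z" "z < x0" "H x0 - H x = (x0 - x) * H' z" by auto
  have "H' z < 0" using n[of z] z True by auto
  hence "(x0 - x) * H' z < 0" using True by (simp add: mult_pos_neg)
  thus ?thesis using z by linarith
next
  case False
  hence F: "x0 < x" using assms(1) by auto
  have "\<And>y. x0 \<le> y \<Longrightarrow> y \<le> x \<Longrightarrow> DERIV H y :> H' y" using d F by auto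
  from MVT2[OF F this] obtain z where z: "x0 < z" "z < x" "H x - H x0 = (x - x0) * H' z" by auto
  have "H' z > 0" using p[of z] z F by auto
  hence "(x - x0) * H' z > 0" using F by simp
  thus ?thesis using z by linarith
qed

lemma PP:
  assumes sh: "strongly_hyperbolic f" and a1: "a1 > 0" and a2: "a2 > 0" and d: "d > 0" and u0: "u0 > 0"
    and tan: "a1 * deriv f u0 = a2 * deriv f (u0 + d)"
  shows "a1 \<le> a2" "a2 * f (u0 + d) - a1 * f u0 > 0"
    "\<And>u. u > 0 \<Longrightarrow> u \<noteq> u0 \<Longrightarrow> a1 * f u - a2 * f (u + d) + (a2 * f (u0 + d) - a1 * f u0) > 0"
proof -
  define A where "A = (\<lambda>x. - deriv f x)"
  have Apos: "\<And>x. x > 0 \<Longrightarrow> A x > 0" using sh_negderiv[OF sh] by (simp add: A_def)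
  have absA: "\<And>x. x > 0 \<Longrightarrow> \<bar>deriv f x\<bar> = A x"
  proof -
    fix x :: real assume "x > 0"
    hence "deriv f x < 0" by (rule sh_negderiv[OF sh])
    thus "\<bar>deriv f x\<bar> = A x" by (simp add: A_def)
  qed
  have tanA: "a1 * A u0 = a2 * A (u0 + d)" using tan by (simp add: A_def)
  have mono: "A (u0 + d) < A u0" using sh_deriv_mono[OF sh u0, of "u0 + d"] d by (simp add: A_def)
  show "a1 \<le> a2"
  proof (rule ccontr)
    assume "\<not> a1 \<le> a2"
    hence "a2 * A (u0 + d) < a1 * A (u0 + d)" using Apos[of "u0+d"] u0 d by simp
    also have "... < a1 * A u0" using mono a1 by simp
    finally have "a2 * A (u0 + d) < a1 * A u0" .
    thus False using tanA by simp
  qed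
  have mult: "\<And>u w. 0 < u \<Longrightarrow> u < w \<Longrightarrow> A w * A (u + d) < A u * A (w + d)"
  proof -
    fix u w :: real assume uw: "0 < u" "u < w"
    have "ln (A w) + ln (A (u + d)) < ln (A u) + ln (A (w + d))"
      using sh_logconv[OF sh uw d] absA uw d by simp
    moreover have p: "A w > 0" "A (u + d) > 0" "A u > 0" "A (w + d) > 0" using Apos uw d by auto
    ultimately have "ln (A w * A (u + d)) < ln (A u * A (w + d))" by (simp add: ln_mult)
    thus "A w * A (u + d) < A u * A (w + d)" using p by simp
  qed
  define k where "k = a2 * f (u0 + d) - a1 * f u0"
  define H where "H = (\<lambda>u. a1 * f u - a2 * f (u + d) + k)"
  define H' where "H' = (\<lambda>u. a2 * A (u + d) - a1 * A u)"
  have HD: "\<And>u. u > 0 \<Longrightarrow> DERIV H u :> H' u"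
  proof -
    fix u :: real assume "u > 0"
    hence d1: "DERIV f u :> deriv f u" and d2: "DERIV f (u + d) :> deriv f (u + d)" using sh_deriv[OF sh] d by auto
    have d3: "DERIV (\<lambda>x. f (x + d)) u :> deriv f (u + d) * 1"
      by (rule DERIV_chain2[where g="\<lambda>x. x + d", OF d2]) (auto intro!: derivative_eq_intros)
    show "DERIV H u :> H' u" unfolding H_def H'_def A_def
      using d1 d3 by (auto intro!: derivative_eq_intros simp: algebra_simps)
  qed
  have Hneg: "\<And>u. 0 < u \<Longrightarrow> u < u0 \<Longrightarrow> H' u < 0"
  proof -
    fix u assume u: "0 < u" "u < u0"
    have m: "A u0 * A (u + d) < A u * A (u0 + d)" using mult[OF u] .
    have "a1 * A u0 * A (u + d) < a1 * A u * A (u0 + d)" using m a1 by (simp add: mult.assoc)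
    hence "a2 * A (u0 + d) * A (u + d) < a1 * A u * A (u0 + d)" using tanA by simp
    hence "(a2 * A (u + d)) * A (u0 + d) < (a1 * A u) * A (u0 + d)" by (simp add: algebra_simps)
    hence "a2 * A (u + d) < a1 * A u" using Apos[of "u0+d"] u0 d by (simp add: mult_less_cancel_right)
    thus "H' u < 0" by (simp add: H'_def)
  qed
  have Hpos: "\<And>u. u0 < u \<Longrightarrow> H' u > 0"
  proof -
    fix u assume u: "u0 < u"
    have m: "A u * A (u0 + d) < A u0 * A (u + d)" using mult[OF u0 u] .
    have "a1 * A u * A (u0 + d) < a1 * A u0 * A (u + d)" using m a1 by (simp add: mult.assoc)
    hence "a1 * A u * A (u0 + d) < a2 * A (u0 + d) * A (u + d)" using tanA by simp
    hence "(a1 * A u) * A (u0 + d) < (a2 * A (u + d)) * A (u0 + d)" by (simp add: algebra_simps)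
    hence "a1 * A u < a2 * A (u + d)" using Apos[of "u0+d"] u0 d by (simp add: mult_less_cancel_right)
    thus "H' u > 0" by (simp add: H'_def)
  qed
  have H0: "H u0 = 0" by (simp add: H_def k_def)
  have main: "\<And>u. u > 0 \<Longrightarrow> u \<noteq> u0 \<Longrightarrow> H u > 0"
  proof -
    fix u :: real assume u: "u > 0" "u \<noteq> u0"
    have "H u > H u0"
      by (rule valley[OF u(2), of H H']) (use HD Hneg Hpos u u0 in auto)
    thus "H u > 0" using H0 by simp
  qed
  thus "\<And>u. u > 0 \<Longrightarrow> u \<noteq> u0 \<Longrightarrow> a1 * f u - a2 * f (u + d) + (a2 * f (u0 + d) - a1 * f u0) > 0"
    by (simp add: H_def k_def)
  have inc: "\<And>u. u > u0 + 1 \<Longrightarrow> H (u0 + 1) < H u"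
  proof -
    fix u assume u: "u > u0 + 1"
    have "\<And>y. u0 + 1 \<le> y \<Longrightarrow> y \<le> u \<Longrightarrow> DERIV H y :> H' y" using HD u0 by auto
    from MVT2[OF u this] obtain z where z: "u0 + 1 < z" "z < u" "H u - H (u0 + 1) = (u - (u0 + 1)) * H' z" by auto
    have "H' z > 0" using Hpos[of z] z by auto
    hence "(u - (u0 + 1)) * H' z > 0" using u by simp
    thus "H (u0 + 1) < H u" using z by linarith
  qed
  have flim: "(f \<longlongrightarrow> 0) at_top" using sh unfolding strongly_hyperbolic_def by auto
  have flim2: "((\<lambda>u. f (u + d)) \<longlongrightarrow> 0) at_top"
    using filterlim_compose[OF flim filterlim_tendsto_add_at_top[OF tendsto_const filterlim_ident, of d]]
    by (simp add: add.commute)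
  have "(H \<longlongrightarrow> a1 * 0 - a2 * 0 + k) at_top" unfolding H_def
    by (intro tendsto_intros flim flim2)
  hence Hlim: "(H \<longlongrightarrow> k) at_top" by simp
  have "H (u0 + 1) \<le> k"
  proof (rule tendsto_lowerbound[OF Hlim])
    show "\<forall>\<^sub>F x in at_top. H (u0 + 1) \<le> H x"
      using eventually_gt_at_top[of "u0 + 1"] by eventually_elim (use inc in \<open>auto intro: less_imp_le\<close>)
  qed simp
  moreover have "H (u0 + 1) > 0" using main[of "u0 + 1"] u0 by simp
  ultimately show "a2 * f (u0 + d) - a1 * f u0 > 0" by (simp add: k_def)
qed



lemma fabc_pos: "x > -b \<Longrightarrow> fabc f1 f2 a b c x = a * f1 (x + b) + c"
  by (simp add: fabc_def)

lemma fabc_neg: "x < -b \<Longrightarrow> fabc f1 f2 a b c x = - a * f2 (- x - b) + c"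
  by (simp add: fabc_def)

lemma DERIV_pos:
  assumes sh: "strongly_hyperbolic f1" and x: "x > -b"
  shows "DERIV (fabc f1 f2 a b c) x :> a * deriv f1 (x + b)"
proof -
  have d2: "DERIV f1 (x + b) :> deriv f1 (x + b)" using sh_deriv[OF sh] x by simp
  have d3: "DERIV (\<lambda>y. f1 (y + b)) x :> deriv f1 (x + b) * 1"
    by (rule DERIV_chain2[where g="\<lambda>y. y + b", OF d2]) (auto intro!: derivative_eq_intros)
  have d4: "DERIV (\<lambda>y. a * f1 (y + b) + c) x :> a * deriv f1 (x + b)"
    using d3 by (auto intro!: derivative_eq_intros)
  show ?thesis
    by (rule has_field_derivative_transform_within_open[OF d4, of "{-b<..}"]) (use x in \<open>auto simp: fabc_pos\<close>)
qed

lemma DERIV_neg: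
  assumes sh: "strongly_hyperbolic f2" and x: "x < -b"
  shows "DERIV (fabc f1 f2 a b c) x :> a * deriv f2 (- x - b)"
proof -
  have d2: "DERIV f2 (- x - b) :> deriv f2 (- x - b)" using sh_deriv[OF sh] x by simp
  have d3: "DERIV (\<lambda>y. f2 (- y - b)) x :> deriv f2 (- x - b) * (- 1)"
    by (rule DERIV_chain2[where g="\<lambda>y. - y - b", OF d2]) (auto intro!: derivative_eq_intros)
  have d4: "DERIV (\<lambda>y. - a * f2 (- y - b) + c) x :> a * deriv f2 (- x - b)"
    using d3 by (auto intro!: derivative_eq_intros)
  show ?thesis
    by (rule has_field_derivative_transform_within_open[OF d4, of "{..< -b}"]) (use x in \<open>auto simp: fabc_neg\<close>)
qed

lemma deriv_pos: "strongly_hyperbolic f1 \<Longrightarrow> x > -b \<Longrightarrow> deriv (fabc f1 f2 a b c) x = a * deriv f1 (x + b)"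
  using DERIV_pos DERIV_imp_deriv by blast

lemma deriv_neg: "strongly_hyperbolic f2 \<Longrightarrow> x < -b \<Longrightarrow> deriv (fabc f1 f2 a b c) x = a * deriv f2 (- x - b)"
  using DERIV_neg DERIV_imp_deriv by blast



lemma case3_lt:
  assumes sh1: "strongly_hyperbolic f1" and sh2: "strongly_hyperbolic f2"
    and a1: "a1 > 0" and a2: "a2 > 0" and lt: "b1 < b2"
    and x1: "xp \<noteq> -b1" and x2: "xp \<noteq> -b2"
    and val: "fabc f1 f2 a1 b1 c1 xp = fabc f1 f2 a2 b2 c2 xp"
    and der: "deriv (fabc f1 f2 a1 b1 c1) xp = deriv (fabc f1 f2 a2 b2 c2) xp"
  shows "c1 \<noteq> c2 \<and> (\<forall>x. x \<noteq> -b1 \<longrightarrow> x \<noteq> -b2 \<longrightarrow> fabc f1 f2 a1 b1 c1 x = fabc f1 f2 a2 b2 c2 x \<longrightarrow> x = xp)"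
proof -
  define d where "d = b2 - b1"
  have d: "d > 0" using lt by (simp add: d_def)
  consider "xp > -b1" | "-b2 < xp \<and> xp < -b1" | "xp < -b2" using x1 x2 lt by linarith
  then show ?thesis
  proof cases
    case 1
    define u0 where "u0 = xp + b1"
    have u0: "u0 > 0" using 1 by (simp add: u0_def)
    have e: "u0 + d = xp + b2" by (simp add: u0_def d_def)
    have xb2: "xp > -b2" using 1 lt by linarith
    have tan: "a1 * deriv f1 u0 = a2 * deriv f1 (u0 + d)"
      unfolding e using der deriv_pos[OF sh1 1] deriv_pos[OF sh1 xb2] by (simp add: u0_def)
    note P = PP[OF sh1 a1 a2 d u0 tan]
    have v: "a1 * f1 u0 + c1 = a2 * f1 (u0 + d) + c2" unfolding e using val fabc_pos[OF 1] fabc_pos[OF xb2] by (simp add: u0_def)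
    hence k: "a2 * f1 (u0 + d) - a1 * f1 u0 = c1 - c2" by linarith
    have cne: "c1 > c2" using P(2) k by linarith
    have uniq: "x = xp" if xx: "x \<noteq> -b1" "x \<noteq> -b2" "fabc f1 f2 a1 b1 c1 x = fabc f1 f2 a2 b2 c2 x" for x
    proof -
      consider "x > -b1" | "-b2 < x \<and> x < -b1" | "x < -b2" using xx lt by linarith
      then show ?thesis
      proof cases
        case 1
        hence "x > -b2" using lt by linarith
        hence eq: "a1 * f1 (x + b1) + c1 = a2 * f1 (x + b1 + d) + c2"
          using xx(3) fabc_pos[OF 1] fabc_pos[where x=x and b=b2] by (simp add: d_def)
        show ?thesis
        proof (rule ccontr)
          assume "x \<noteq> xp"
          hence "x + b1 \<noteq> u0" by (simp add: u0_def)
          from P(3)[OF _ this] 1 have "a1 * f1 (x + b1) - a2 * f1 (x + b1 + d) + (c1 - c2) > 0"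
            using k by simp
          thus False using eq by linarith
        qed
      next
        case 2
        have L: "fabc f1 f2 a1 b1 c1 x < c1"
          using fabc_neg[where x=x and b=b1] 2 sh_pos[OF sh2, of "-x-b1"] a1 by simp
        have "f1 (x + b2) > f1 (u0 + d)" using sh_decr[OF sh1, of "x + b2" "u0+d"] 2 e 1 by linarith
        hence "a2 * f1 (x + b2) > a2 * f1 (u0 + d)" using a2 by simp
        moreover have "a1 * f1 u0 > 0" using a1 sh_pos[OF sh1 u0] by simp
        ultimately have "fabc f1 f2 a2 b2 c2 x > c1" using fabc_pos[where x=x and b=b2] 2 k by simp
        thus ?thesis using L xx(3) by simp
      next
        case 3
        define s where "s = - x - b2"
        have s: "s > 0" using 3 by (simp add: s_def)
        have "x < -b1" using 3 lt by linarith
        have esd: "s + d = - x - b1" by (simp add: s_def d_def)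
        have eq: "- a1 * f2 (s + d) + c1 = - a2 * f2 s + c2" unfolding esd using \<open>x < -b1\<close> xx(3) fabc_neg[OF 3] fabc_neg[where x=x and b=b1]
          by (simp add: s_def)
        have "f2 (s + d) < f2 s" using sh_decr[OF sh2 s, of "s+d"] d by simp
        hence "a1 * f2 (s + d) < a1 * f2 s" using a1 by simp
        also have "... \<le> a2 * f2 s" using P(1) sh_pos[OF sh2 s] by (simp add: mult_right_mono)
        finally show ?thesis using eq cne by linarith
      qed
    qed
    show ?thesis using cne uniq by auto
  next
    case 3
    define s0 where "s0 = - xp - b2"
    have s0: "s0 > 0" using 3 by (simp add: s0_def)
    have e: "s0 + d = - xp - b1" by (simp add: s0_def d_def)
    have xb1: "xp < -b1" using 3 lt by linarith
    have tan: "a2 * deriv f2 s0 = a1 * deriv f2 (s0 + d)"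
      unfolding e using der deriv_neg[OF sh2 3] deriv_neg[OF sh2 xb1] by (simp add: s0_def)
    note P = PP[OF sh2 a2 a1 d s0 tan]
    have v: "- a1 * f2 (s0 + d) + c1 = - a2 * f2 s0 + c2" unfolding e using val fabc_neg[OF 3] fabc_neg[OF xb1]
      by (simp add: s0_def)
    hence k: "a1 * f2 (s0 + d) - a2 * f2 s0 = c1 - c2" by linarith
    have cne: "c1 > c2" using P(2) k by linarith
    have uniq: "x = xp" if xx: "x \<noteq> -b1" "x \<noteq> -b2" "fabc f1 f2 a1 b1 c1 x = fabc f1 f2 a2 b2 c2 x" for x
    proof -
      consider "x > -b1" | "-b2 < x \<and> x < -b1" | "x < -b2" using xx lt by linarith
      then show ?thesis
      proof cases
        case 3
        define s where "s = - x - b2"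
        have s: "s > 0" using 3 by (simp add: s_def)
        have "x < -b1" using 3 lt by linarith
        have esd: "s + d = - x - b1" by (simp add: s_def d_def)
        have eq: "- a1 * f2 (s + d) + c1 = - a2 * f2 s + c2" unfolding esd using \<open>x < -b1\<close> xx(3) fabc_neg[OF 3] fabc_neg[where x=x and b=b1]
          by (simp add: s_def)
        show ?thesis
        proof (rule ccontr)
          assume "x \<noteq> xp"
          hence "s \<noteq> s0" by (simp add: s_def s0_def)
          from P(3)[OF s this] have "a2 * f2 s - a1 * f2 (s + d) + (c1 - c2) > 0"
            using k by simp
          thus False using eq by linarith
        qed
      next
        case 2
        have R: "fabc f1 f2 a2 b2 c2 x > c2"
          using fabc_pos[where x=x and b=b2] 2 sh_pos[OF sh1, of "x+b2"] a2 by simp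
        have "f2 (- x - b1) > f2 (s0 + d)" using sh_decr[OF sh2, of "- x - b1" "s0+d"] 2 e 3 by linarith
        hence "a1 * f2 (- x - b1) > a1 * f2 (s0 + d)" using a1 by simp
        moreover have "a2 * f2 s0 > 0" using a2 sh_pos[OF sh2 s0] by simp
        ultimately have "fabc f1 f2 a1 b1 c1 x < c2" using fabc_neg[where x=x and b=b1] 2 k by simp
        thus ?thesis using R xx(3) by simp
      next
        case 1
        define u where "u = x + b1"
        have u: "u > 0" using 1 by (simp add: u_def)
        have "x > -b2" using 1 lt by linarith
        have eud: "u + d = x + b2" by (simp add: u_def d_def)
        have eq: "a1 * f1 u + c1 = a2 * f1 (u + d) + c2" unfolding eud using \<open>x > -b2\<close> xx(3) fabc_pos[OF 1] fabc_pos[where x=x and b=b2]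
          by (simp add: u_def)
        have "f1 (u + d) < f1 u" using sh_decr[OF sh1 u, of "u+d"] d by simp
        hence "a2 * f1 (u + d) < a2 * f1 u" using a2 by simp
        also have "... \<le> a1 * f1 u" using P(1) sh_pos[OF sh1 u] by (simp add: mult_right_mono)
        finally show ?thesis using eq cne by linarith
      qed
    qed
    show ?thesis using cne uniq by auto
  next
    case 2
    have xb1: "xp < -b1" and xb2: "xp > -b2" using 2 by auto
    have F1xp: "fabc f1 f2 a1 b1 c1 xp = - a1 * f2 (- xp - b1) + c1" using fabc_neg[OF xb1] .
    have F2xp: "fabc f1 f2 a2 b2 c2 xp = a2 * f1 (xp + b2) + c2" using fabc_pos[OF xb2] .
    have "fabc f1 f2 a1 b1 c1 xp < c1" using F1xp a1 sh_pos[OF sh2, of "- xp - b1"] xb1 by simp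
    moreover have "fabc f1 f2 a2 b2 c2 xp > c2" using F2xp a2 sh_pos[OF sh1, of "xp + b2"] xb2 by simp
    ultimately have cne: "c1 > c2" using val by linarith
    have tan: "a1 * deriv f2 (- xp - b1) = a2 * deriv f1 (xp + b2)"
      using der deriv_neg[OF sh2 xb1] deriv_pos[OF sh1 xb2] by simp
    have uniq: "x = xp" if xx: "x \<noteq> -b1" "x \<noteq> -b2" "fabc f1 f2 a1 b1 c1 x = fabc f1 f2 a2 b2 c2 x" for x
    proof -
      consider "x > -b1" | "-b2 < x \<and> x < -b1" | "x < -b2" using xx lt by linarith
      then show ?thesis
      proof cases
        case 1
        have "fabc f1 f2 a1 b1 c1 x > c1" using fabc_pos[OF 1] a1 sh_pos[OF sh1, of "x + b1"] 1 by simp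
        moreover have "f1 (x + b2) < f1 (xp + b2)" using sh_decr[OF sh1, of "xp + b2" "x + b2"] 1 xb2 xb1 by linarith
        hence "a2 * f1 (x + b2) < a2 * f1 (xp + b2)" using a2 by simp
        hence "fabc f1 f2 a2 b2 c2 x < fabc f1 f2 a2 b2 c2 xp" using F2xp fabc_pos[where x=x and b=b2] 1 lt by simp
        ultimately show ?thesis using xx(3) val \<open>fabc f1 f2 a1 b1 c1 xp < c1\<close> by linarith
      next
        case 3
        have "fabc f1 f2 a2 b2 c2 x < c2" using fabc_neg[OF 3] a2 sh_pos[OF sh2, of "- x - b2"] 3 by simp
        moreover have "f2 (- x - b1) < f2 (- xp - b1)" using sh_decr[OF sh2, of "- xp - b1" "- x - b1"] 3 xb2 xb1 by linarith
        hence "a1 * f2 (- x - b1) < a1 * f2 (- xp - b1)" using a1 by simp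
        hence "fabc f1 f2 a1 b1 c1 x > fabc f1 f2 a1 b1 c1 xp" using F1xp fabc_neg[where x=x and b=b1] 3 lt by simp
        ultimately show ?thesis using xx(3) val \<open>fabc f1 f2 a2 b2 c2 xp > c2\<close> by linarith
      next
        case 2
        define H where "H = (\<lambda>y. fabc f1 f2 a2 b2 c2 y - fabc f1 f2 a1 b1 c1 y)"
        define H' where "H' = (\<lambda>y. a2 * deriv f1 (y + b2) - a1 * deriv f2 (- y - b1))"
        show ?thesis
        proof (rule ccontr)
          assume ne: "x \<noteq> xp"
          have "H x > H xp"
          proof (rule valley[OF ne, of H H'])
            fix y assume y: "min x xp \<le> y" "y \<le> max x xp"
            hence y1: "y > -b2" "y < -b1" using 2 xb1 xb2 by auto
            show "DERIV H y :> H' y" unfolding H_def H'_def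
              by (rule DERIV_diff[OF DERIV_pos[OF sh1 y1(1)] DERIV_neg[OF sh2 y1(2)]])
          next
            fix y assume y: "min x xp < y" "y < xp"
            hence y1: "y > -b2" "y < -b1" using 2 xb1 xb2 by auto
            have "deriv f1 (y + b2) < deriv f1 (xp + b2)" using sh_deriv_mono[OF sh1, of "y + b2" "xp + b2"] y y1 by simp
            hence i1: "a2 * deriv f1 (y + b2) < a2 * deriv f1 (xp + b2)" using a2 by simp
            have "deriv f2 (- xp - b1) < deriv f2 (- y - b1)" using sh_deriv_mono[OF sh2, of "- xp - b1" "- y - b1"] y xb1 by simp
            hence i2: "a1 * deriv f2 (- xp - b1) < a1 * deriv f2 (- y - b1)" using a1 by simp
            show "H' y < 0" using i1 i2 tan by (simp add: H'_def)
          next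
            fix y assume y: "xp < y" "y < max x xp"
            hence y1: "y > -b2" "y < -b1" using 2 xb1 xb2 by auto
            have "deriv f1 (xp + b2) < deriv f1 (y + b2)" using sh_deriv_mono[OF sh1, of "xp + b2" "y + b2"] y xb2 by simp
            hence i1: "a2 * deriv f1 (xp + b2) < a2 * deriv f1 (y + b2)" using a2 by simp
            have "deriv f2 (- y - b1) < deriv f2 (- xp - b1)" using sh_deriv_mono[OF sh2, of "- y - b1" "- xp - b1"] y y1 by simp
            hence i2: "a1 * deriv f2 (- y - b1) < a1 * deriv f2 (- xp - b1)" using a1 by simp
            show "H' y > 0" using i1 i2 tan by (simp add: H'_def)
          qed
          thus False using xx(3) val by (simp add: H_def)
        qed
      qed
    qed
    show ?thesis using cne uniq by auto
  qed
qed



lemma mem_gc: "q \<in> graph_closure f1 f2 a b c \<longleftrightarrow>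
  (\<exists>x. x \<noteq> -b \<and> q = (Fin x, Fin (fabc f1 f2 a b c x))) \<or> q = (Fin (-b), Infty) \<or> q = (Infty, Fin c)"
  unfolding graph_closure_def by (simp only: Un_iff insert_iff empty_iff mem_Collect_eq) blast

lemma inter_fin:
  assumes "b1 \<noteq> b2" "c1 \<noteq> c2" "xp \<noteq> -b1" "xp \<noteq> -b2"
    "fabc f1 f2 a1 b1 c1 xp = yp" "fabc f1 f2 a2 b2 c2 xp = yp"
    "\<forall>x. x \<noteq> -b1 \<longrightarrow> x \<noteq> -b2 \<longrightarrow> fabc f1 f2 a1 b1 c1 x = fabc f1 f2 a2 b2 c2 x \<longrightarrow> x = xp"
  shows "graph_closure f1 f2 a1 b1 c1 \<inter> graph_closure f1 f2 a2 b2 c2 = {(Fin xp, Fin yp)}"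
proof (rule set_eqI, rule iffI)
  fix q assume "q \<in> graph_closure f1 f2 a1 b1 c1 \<inter> graph_closure f1 f2 a2 b2 c2"
  hence A: "(\<exists>x. x \<noteq> -b1 \<and> q = (Fin x, Fin (fabc f1 f2 a1 b1 c1 x))) \<or> q = (Fin (-b1), Infty) \<or> q = (Infty, Fin c1)"
    and B: "(\<exists>x. x \<noteq> -b2 \<and> q = (Fin x, Fin (fabc f1 f2 a2 b2 c2 x))) \<or> q = (Fin (-b2), Infty) \<or> q = (Infty, Fin c2)"
    unfolding Int_iff mem_gc by blast+
  from A B show "q \<in> {(Fin xp, Fin yp)}"
  proof (elim disjE exE conjE)
    fix x y assume xy: "x \<noteq> -b1" "q = (Fin x, Fin (fabc f1 f2 a1 b1 c1 x))" "y \<noteq> -b2" "q = (Fin y, Fin (fabc f1 f2 a2 b2 c2 y))"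
    from xy(2,4) have "(Fin x, Fin (fabc f1 f2 a1 b1 c1 x)) = (Fin y, Fin (fabc f1 f2 a2 b2 c2 y))" by (rule subst)
    note tup = this
    have e0: "x = y" using arg_cong[OF tup, of fst] by simp
    have e0': "fabc f1 f2 a1 b1 c1 x = fabc f1 f2 a2 b2 c2 y" using arg_cong[OF tup, of snd] by simp
    have e1: "fabc f1 f2 a1 b1 c1 x = fabc f1 f2 a2 b2 c2 x" using e0' unfolding e0 .
    have x2: "x \<noteq> -b2" using e0 xy(3) by simp
    have "x = xp" by (rule assms(7)[rule_format, OF xy(1) x2 e1])
    thus ?thesis using assms(5) xy(2) by simp
  qed (use assms(1,2) in simp_all)
next
  fix q assume "q \<in> {(Fin xp, Fin yp)}"
  hence q: "q = (Fin xp, Fin yp)" by simp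
  have m1: "(Fin xp, Fin (fabc f1 f2 a1 b1 c1 xp)) \<in> graph_closure f1 f2 a1 b1 c1"
    unfolding graph_closure_def using assms(3) by blast
  have m2: "(Fin xp, Fin (fabc f1 f2 a2 b2 c2 xp)) \<in> graph_closure f1 f2 a2 b2 c2"
    unfolding graph_closure_def using assms(4) by blast
  show "q \<in> graph_closure f1 f2 a1 b1 c1 \<inter> graph_closure f1 f2 a2 b2 c2"
    using m1 m2 unfolding q assms(5,6) by (rule IntI)
qed

lemma inter_c:
  assumes "b1 = b2" "c1 \<noteq> c2"
    "\<forall>x. x \<noteq> -b1 \<longrightarrow> fabc f1 f2 a1 b1 c1 x \<noteq> fabc f1 f2 a2 b2 c2 x"
  shows "graph_closure f1 f2 a1 b1 c1 \<inter> graph_closure f1 f2 a2 b2 c2 = {(Fin (-b1), Infty)}"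
proof (rule set_eqI, rule iffI)
  fix q assume "q \<in> graph_closure f1 f2 a1 b1 c1 \<inter> graph_closure f1 f2 a2 b2 c2"
  hence A: "(\<exists>x. x \<noteq> -b1 \<and> q = (Fin x, Fin (fabc f1 f2 a1 b1 c1 x))) \<or> q = (Fin (-b1), Infty) \<or> q = (Infty, Fin c1)"
    and B: "(\<exists>x. x \<noteq> -b2 \<and> q = (Fin x, Fin (fabc f1 f2 a2 b2 c2 x))) \<or> q = (Fin (-b2), Infty) \<or> q = (Infty, Fin c2)"
    unfolding Int_iff mem_gc by blast+
  from A B show "q \<in> {(Fin (-b1), Infty)}"
  proof (elim disjE exE conjE)
    fix x y assume xy: "x \<noteq> -b1" "q = (Fin x, Fin (fabc f1 f2 a1 b1 c1 x))" "y \<noteq> -b2" "q = (Fin y, Fin (fabc f1 f2 a2 b2 c2 y))"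
    from xy(2,4) have "(Fin x, Fin (fabc f1 f2 a1 b1 c1 x)) = (Fin y, Fin (fabc f1 f2 a2 b2 c2 y))" by (rule subst)
    note tup = this
    have e0: "x = y" using arg_cong[OF tup, of fst] by simp
    have e0': "fabc f1 f2 a1 b1 c1 x = fabc f1 f2 a2 b2 c2 y" using arg_cong[OF tup, of snd] by simp
    have e1: "fabc f1 f2 a1 b1 c1 x = fabc f1 f2 a2 b2 c2 x" using e0' unfolding e0 .
    have x2: "x \<noteq> -b2" using e0 xy(3) by simp
    have False using assms(3)[rule_format, OF xy(1)] e1 by simp
    thus ?thesis ..
  qed (use assms(1,2) in simp_all)
next
  fix q assume "q \<in> {(Fin (-b1), Infty)}"
  hence q: "q = (Fin (-b1), Infty)" by simp
  show "q \<in> graph_closure f1 f2 a1 b1 c1 \<inter> graph_closure f1 f2 a2 b2 c2"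
    unfolding q graph_closure_def using assms(1) by simp
qed

lemma inter_b:
  assumes "b1 \<noteq> b2" "c1 = c2"
    "\<forall>x. x \<noteq> -b1 \<longrightarrow> x \<noteq> -b2 \<longrightarrow> fabc f1 f2 a1 b1 c1 x \<noteq> fabc f1 f2 a2 b2 c2 x"
  shows "graph_closure f1 f2 a1 b1 c1 \<inter> graph_closure f1 f2 a2 b2 c2 = {(Infty, Fin c1)}"
proof (rule set_eqI, rule iffI)
  fix q assume "q \<in> graph_closure f1 f2 a1 b1 c1 \<inter> graph_closure f1 f2 a2 b2 c2"
  hence A: "(\<exists>x. x \<noteq> -b1 \<and> q = (Fin x, Fin (fabc f1 f2 a1 b1 c1 x))) \<or> q = (Fin (-b1), Infty) \<or> q = (Infty, Fin c1)"
    and B: "(\<exists>x. x \<noteq> -b2 \<and> q = (Fin x, Fin (fabc f1 f2 a2 b2 c2 x))) \<or> q = (Fin (-b2), Infty) \<or> q = (Infty, Fin c2)"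
    unfolding Int_iff mem_gc by blast+
  from A B show "q \<in> {(Infty, Fin c1)}"
  proof (elim disjE exE conjE)
    fix x y assume xy: "x \<noteq> -b1" "q = (Fin x, Fin (fabc f1 f2 a1 b1 c1 x))" "y \<noteq> -b2" "q = (Fin y, Fin (fabc f1 f2 a2 b2 c2 y))"
    from xy(2,4) have "(Fin x, Fin (fabc f1 f2 a1 b1 c1 x)) = (Fin y, Fin (fabc f1 f2 a2 b2 c2 y))" by (rule subst)
    note tup = this
    have e0: "x = y" using arg_cong[OF tup, of fst] by simp
    have e0': "fabc f1 f2 a1 b1 c1 x = fabc f1 f2 a2 b2 c2 y" using arg_cong[OF tup, of snd] by simp
    have e1: "fabc f1 f2 a1 b1 c1 x = fabc f1 f2 a2 b2 c2 x" using e0' unfolding e0 .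
    have x2: "x \<noteq> -b2" using e0 xy(3) by simp
    have False using assms(3)[rule_format, OF xy(1) x2] e1 by simp
    thus ?thesis ..
  qed (use assms(1,2) in simp_all)
next
  fix q assume "q \<in> {(Infty, Fin c1)}"
  hence q: "q = (Infty, Fin c1)" by simp
  show "q \<in> graph_closure f1 f2 a1 b1 c1 \<inter> graph_closure f1 f2 a2 b2 c2"
    unfolding q graph_closure_def using assms(2) by simp
qed

lemma case3_eq:
  assumes sh1: "strongly_hyperbolic f1" and sh2: "strongly_hyperbolic f2"
    and a1: "a1 > 0" and a2: "a2 > 0" and ne: "(a1, b1, c1) \<noteq> (a2, b2, c2)" and eqb: "b1 = b2"
    and x1: "xp \<noteq> -b1"
    and val: "fabc f1 f2 a1 b1 c1 xp = fabc f1 f2 a2 b2 c2 xp"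
    and der: "deriv (fabc f1 f2 a1 b1 c1) xp = deriv (fabc f1 f2 a2 b2 c2) xp"
  shows False
proof (cases "xp > -b1")
  case True
  have "xp > -b2" using True eqb by simp
  hence "a1 * deriv f1 (xp + b1) = a2 * deriv f1 (xp + b1)" using der deriv_pos[OF sh1 True] deriv_pos[OF sh1, of xp b2] eqb by simp
  moreover have "deriv f1 (xp + b1) < 0" using sh_negderiv[OF sh1] True by simp
  ultimately have "a1 = a2" by simp
  moreover have "c1 = c2" using val fabc_pos[OF True] fabc_pos[where x=xp and b=b2] True eqb \<open>a1 = a2\<close> by simp
  ultimately show False using ne eqb by simp
next
  case False
  hence F: "xp < -b1" using x1 by simp
  hence "xp < -b2" using eqb by simp
  hence "a1 * deriv f2 (- xp - b1) = a2 * deriv f2 (- xp - b1)" using der deriv_neg[OF sh2 F] deriv_neg[OF sh2, of xp b2] eqb by simp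
  moreover have "deriv f2 (- xp - b1) < 0" using sh_negderiv[OF sh2] F by simp
  ultimately have "a1 = a2" by simp
  moreover have "c1 = c2" using val fabc_neg[OF F] fabc_neg[where x=xp and b=b2] F eqb \<open>a1 = a2\<close> by simp
  ultimately show False using ne eqb by simp
qed

lemma case2_fin:
  assumes sh1: "strongly_hyperbolic f1" and sh2: "strongly_hyperbolic f2" and a: "a > 0"
    and ne: "b1 \<noteq> b2" and x1: "x \<noteq> -b1" and x2: "x \<noteq> -b2"
  shows "fabc f1 f2 a b1 c x \<noteq> fabc f1 f2 a b2 c x"
proof
  assume eq: "fabc f1 f2 a b1 c x = fabc f1 f2 a b2 c x"
  consider "x > -b1" "x > -b2" | "x > -b1" "x < -b2" | "x < -b1" "x > -b2" | "x < -b1" "x < -b2"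
    using x1 x2 by linarith
  then show False
  proof cases
    case 1
    hence "f1 (x + b1) = f1 (x + b2)" using eq fabc_pos[OF 1(1)] fabc_pos[OF 1(2)] a by simp
    moreover have "x + b1 < x + b2 \<or> x + b2 < x + b1" using ne by linarith
    ultimately show False using sh_decr[OF sh1, of "x + b1" "x + b2"] sh_decr[OF sh1, of "x + b2" "x + b1"] 1 by auto
  next
    case 2
    have p1: "a * f1 (x + b1) > 0" using a sh_pos[OF sh1, of "x + b1"] 2 by simp
    have p2: "a * f2 (- x - b2) > 0" using a sh_pos[OF sh2, of "- x - b2"] 2 by simp
    show False using eq fabc_pos[OF 2(1)] fabc_neg[OF 2(2)] p1 p2 by simp
  next
    case 3
    have p1: "a * f2 (- x - b1) > 0" using a sh_pos[OF sh2, of "- x - b1"] 3 by simp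
    have p2: "a * f1 (x + b2) > 0" using a sh_pos[OF sh1, of "x + b2"] 3 by simp
    show False using eq fabc_neg[OF 3(1)] fabc_pos[OF 3(2)] p1 p2 by simp
  next
    case 4
    hence "f2 (- x - b1) = f2 (- x - b2)" using eq fabc_neg[OF 4(1)] fabc_neg[OF 4(2)] a by simp
    moreover have "- x - b1 < - x - b2 \<or> - x - b2 < - x - b1" using ne by linarith
    ultimately show False using sh_decr[OF sh2, of "- x - b1" "- x - b2"] sh_decr[OF sh2, of "- x - b2" "- x - b1"] 4 by auto
  qed
qed

theorem lemma4p9:
  fixes f1 f2 :: "real \<Rightarrow> real" and a1 a2 b1 b2 c1 c2 :: real and p :: "circ \<times> circ"
  assumes "strongly_hyperbolic f1" and "strongly_hyperbolic f2"
    and "a1 > 0" and "a2 > 0"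
    and "(a1, b1, c1) \<noteq> (a2, b2, c2)"
    and "(\<exists>b. p = (Fin b, Infty) \<and> a1 = a2 \<and> b1 = -b \<and> b2 = -b \<and> c1 \<noteq> c2)
       \<or> (\<exists>c. p = (Infty, Fin c) \<and> a1 = a2 \<and> b1 \<noteq> b2 \<and> c1 = c \<and> c2 = c)
       \<or> (\<exists>xp yp. p = (Fin xp, Fin yp) \<and> xp \<noteq> -b1 \<and> xp \<noteq> -b2 \<and>
            fabc f1 f2 a1 b1 c1 xp = yp \<and> fabc f1 f2 a2 b2 c2 xp = yp \<and>
            deriv (fabc f1 f2 a1 b1 c1) xp = deriv (fabc f1 f2 a2 b2 c2) xp)"
  shows "graph_closure f1 f2 a1 b1 c1 \<inter> graph_closure f1 f2 a2 b2 c2 = {p}"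
  using assms(6)
proof (elim disjE exE conjE)
  fix b assume p: "p = (Fin b, Infty)" and h: "a1 = a2" "b1 = -b" "b2 = -b" "c1 \<noteq> c2"
  have "\<forall>x. x \<noteq> -b1 \<longrightarrow> fabc f1 f2 a1 b1 c1 x \<noteq> fabc f1 f2 a2 b2 c2 x"
  proof (intro allI impI)
    fix x assume "x \<noteq> -b1"
    thus "fabc f1 f2 a1 b1 c1 x \<noteq> fabc f1 f2 a2 b2 c2 x" using h
      by (cases "x > -b1") (simp_all add: fabc_def)
  qed
  from inter_c[OF _ h(4) this] h p show ?thesis by simp
next
  fix c assume p: "p = (Infty, Fin c)" and h: "a1 = a2" "b1 \<noteq> b2" "c1 = c" "c2 = c"
  have "\<forall>x. x \<noteq> -b1 \<longrightarrow> x \<noteq> -b2 \<longrightarrow> fabc f1 f2 a1 b1 c1 x \<noteq> fabc f1 f2 a2 b2 c2 x"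
    using case2_fin[OF assms(1,2,3) h(2)] h by auto
  from inter_b[OF h(2) _ this] h p show ?thesis by simp
next
  fix xp yp assume p: "p = (Fin xp, Fin yp)" and h: "xp \<noteq> -b1" "xp \<noteq> -b2"
    "fabc f1 f2 a1 b1 c1 xp = yp" "fabc f1 f2 a2 b2 c2 xp = yp"
    "deriv (fabc f1 f2 a1 b1 c1) xp = deriv (fabc f1 f2 a2 b2 c2) xp"
  have val: "fabc f1 f2 a1 b1 c1 xp = fabc f1 f2 a2 b2 c2 xp" using h by simp
  consider "b1 < b2" | "b1 = b2" | "b2 < b1" by linarith
  then show ?thesis
  proof cases
    case 1
    from case3_lt[OF assms(1-4) 1 h(1,2) val h(5)]
    have "c1 \<noteq> c2" "\<forall>x. x \<noteq> -b1 \<longrightarrow> x \<noteq> -b2 \<longrightarrow> fabc f1 f2 a1 b1 c1 x = fabc f1 f2 a2 b2 c2 x \<longrightarrow> x = xp"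
      by auto
    from inter_fin[OF _ this(1) h(1,2,3,4) this(2)] 1 p show ?thesis by simp
  next
    case 2
    from case3_eq[OF assms(1-5) 2 h(1) val h(5)] show ?thesis ..
  next
    case 3
    from case3_lt[OF assms(1,2,4,3) 3 h(2,1) val[symmetric] h(5)[symmetric]]
    have "c2 \<noteq> c1" "\<forall>x. x \<noteq> -b2 \<longrightarrow> x \<noteq> -b1 \<longrightarrow> fabc f1 f2 a2 b2 c2 x = fabc f1 f2 a1 b1 c1 x \<longrightarrow> x = xp"
      by auto
    hence "c1 \<noteq> c2" "\<forall>x. x \<noteq> -b1 \<longrightarrow> x \<noteq> -b2 \<longrightarrow> fabc f1 f2 a1 b1 c1 x = fabc f1 f2 a2 b2 c2 x \<longrightarrow> x = xp"
      by auto
    from inter_fin[OF _ this(1) h(1,2,3,4) this(2)] 3 p show ?thesis by simp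
  qed
qed


end
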